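(* Let $d$ be a metric on $\mathbb R^n$ induced by a norm, let $w_1,\dots,w_N$ be contractions on $(\mathbb R^n,d)$, let $p_1,\dots,p_N\in(0,1]$ with $\sum_ip_i=1$, and let $\pi_\infty$ be the invariant measure of the hyperbolic IFS $\{\mathbb R^n;w_1,\dots,w_N;p_1,\dots,p_N\}$. For $\delta>0$, consider the DIFS $\{\mathcal D^n(\delta);\tilde w_1,\dots,\tilde w_N;p_1,\dots,p_N\}$ (with the same constant probabilities), where $\tilde w_i$ is the $\delta$-roundoff of $w_i$, and let $\Pi(\delta)$ be the family of stationary probability distributions of the associated Markov chain that are supported by positive recurrent communication classes of this chain. Then for every continuous bounded $f:\mathbb R^n\to\mathbb R$, $$\lim_{\delta\to0}\sum_{\tilde x\in\mathcal D^n(\delta)}f(\tilde x)\,\pi_k(\delta)\{\tilde x\}=\int_{\mathbb R^n}f\,d\pi_\infty,$$ where for each $\delta$, $\pi_k(\delta)$ is any element of $\Pi(\delta)$; that is, the $\pi_k(\delta)$ converge weakly to $\pi_\infty$ as $\delta\to0$.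
   Context: For $m\in\mathbb Z^n$, $C_\delta(m)=\prod_{j=1}^n[(m_j-\tfrac12)\delta,(m_j+\tfrac12)\delta)$; $\mathcal D^n(\delta)=\{\delta m:m\in\mathbb Z^n\}\subset\mathbb R^n$. The $\delta$-roundoff of $x\in\mathbb R^n$ is $\tilde x=\delta m$ where $x\in C_\delta(m)$; the $\delta$-roundoff of $w$ is $\tilde w(\tilde x)=\widetilde{w(\tilde x)}$ on $\mathcal D^n(\delta)$. The IFS invariant measure is the unique Borel probability measure $\pi_\infty$ on $\mathbb R^n$ with $\pi_\infty=\sum_ip_i\,\pi_\infty\circ w_i^{-1}$. A DIFS with constant probabilities here is the Markov chain on $\mathcal D^n(\delta)$ with transition probabilities $P(\tilde x,\tilde y)=\sum_ip_i\mathbf 1_{\{\tilde y\}}(\tilde w_i(\tilde x))$. Accessibility: $P^k(\tilde x,\tilde y)>0$ for some $k\ge1$; a communication class is a maximal nonempty set of mutually accessible states; a state is positive recurrent if the chain started there returns a.s. with finite expected return time; a positive recurrent communication class is a communication class of positive recurrent states. A stationary probability distribution $\pi$ satisfies $\pi(\tilde y)=\sum_{\tilde x}\pi(\tilde x)P(\tilde x,\tilde y)$; the chain restricted to a positive recurrent communication class has a unique stationary distribution, regarded as a measure on $\mathcal D^n(\delta)$ vanishing outside the class. *)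

theory Defs
  imports "HOL-Probability.Probability"
begin

definition is_norm :: "('a::real_vector \<Rightarrow> real) \<Rightarrow> bool" where
  "is_norm nrm \<longleftrightarrow> (\<forall>x. 0 \<le> nrm x) \<and> (\<forall>x. nrm x = 0 \<longleftrightarrow> x = 0)
     \<and> (\<forall>c x. nrm (c *\<^sub>R x) = \<bar>c\<bar> * nrm x)
     \<and> (\<forall>x y. nrm (x + y) \<le> nrm x + nrm y)"

text \<open>delta-roundoff: x lies in C_delta(m) iff m_j = floor(x_j/delta + 1/2) for all j.\<close>
definition roundoff :: "real \<Rightarrow> real^'n \<Rightarrow> real^'n" where
  "roundoff \<delta> x = (\<chi> j. \<delta> * of_int \<lfloor>x $ j / \<delta> + 1/2\<rfloor>)"

definition lattice :: "real \<Rightarrow> (real^'n) set" where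
  "lattice \<delta> = {x. \<forall>j. \<exists>m::int. x $ j = \<delta> * of_int m}"

definition trans_prob :: "nat \<Rightarrow> (nat \<Rightarrow> 'a \<Rightarrow> 'a) \<Rightarrow> (nat \<Rightarrow> real) \<Rightarrow> 'a \<Rightarrow> 'a \<Rightarrow> real" where
  "trans_prob N W p x y = (\<Sum>i<N. p i * (if W i x = y then 1 else 0))"

fun kstep :: "nat \<Rightarrow> (nat \<Rightarrow> 'a \<Rightarrow> 'a) \<Rightarrow> (nat \<Rightarrow> real) \<Rightarrow> nat \<Rightarrow> 'a \<Rightarrow> 'a \<Rightarrow> real" where
  "kstep N W p 0 x y = (if x = y then 1 else 0)"
| "kstep N W p (Suc k) x y = (\<Sum>i<N. p i * kstep N W p k (W i x) y)"

definition accessible :: "nat \<Rightarrow> (nat \<Rightarrow> 'a \<Rightarrow> 'a) \<Rightarrow> (nat \<Rightarrow> real) \<Rightarrow> 'a \<Rightarrow> 'a \<Rightarrow> bool" where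
  "accessible N W p x y \<longleftrightarrow> (\<exists>k\<ge>1. kstep N W p k x y > 0)"

text \<open>First-passage probabilities: first_pass k x y = probability that the chain started
  at x hits y for the first time (at a time \<ge> 1) exactly at time k.\<close>
fun first_pass :: "nat \<Rightarrow> (nat \<Rightarrow> 'a \<Rightarrow> 'a) \<Rightarrow> (nat \<Rightarrow> real) \<Rightarrow> nat \<Rightarrow> 'a \<Rightarrow> 'a \<Rightarrow> real" where
  "first_pass N W p 0 x y = 0"
| "first_pass N W p (Suc 0) x y = trans_prob N W p x y"
| "first_pass N W p (Suc (Suc k)) x y =
     (\<Sum>i<N. p i * (if W i x = y then 0 else first_pass N W p (Suc k) (W i x) y))"

definition pos_recurrent :: "nat \<Rightarrow> (nat \<Rightarrow> 'a \<Rightarrow> 'a) \<Rightarrow> (nat \<Rightarrow> real) \<Rightarrow> 'a \<Rightarrow> bool" where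
  "pos_recurrent N W p x \<longleftrightarrow>
     (\<lambda>k. first_pass N W p k x x) sums 1 \<and> summable (\<lambda>k. real k * first_pass N W p k x x)"

definition comm_class :: "'a set \<Rightarrow> nat \<Rightarrow> (nat \<Rightarrow> 'a \<Rightarrow> 'a) \<Rightarrow> (nat \<Rightarrow> real) \<Rightarrow> 'a set \<Rightarrow> bool" where
  "comm_class S N W p C \<longleftrightarrow> C \<subseteq> S \<and> C \<noteq> {} \<and>
     (\<forall>x\<in>C. \<forall>y\<in>C. accessible N W p x y) \<and>
     (\<forall>C'. C \<subseteq> C' \<and> C' \<subseteq> S \<and> (\<forall>x\<in>C'. \<forall>y\<in>C'. accessible N W p x y) \<longrightarrow> C' = C)"

definition pos_rec_class :: "'a set \<Rightarrow> nat \<Rightarrow> (nat \<Rightarrow> 'a \<Rightarrow> 'a) \<Rightarrow> (nat \<Rightarrow> real) \<Rightarrow> 'a set \<Rightarrow> bool" where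
  "pos_rec_class S N W p C \<longleftrightarrow> comm_class S N W p C \<and> (\<forall>x\<in>C. pos_recurrent N W p x)"

definition stationary_on :: "nat \<Rightarrow> (nat \<Rightarrow> 'a \<Rightarrow> 'a) \<Rightarrow> (nat \<Rightarrow> real) \<Rightarrow> 'a set \<Rightarrow> ('a \<Rightarrow> real) \<Rightarrow> bool" where
  "stationary_on N W p C \<pi> \<longleftrightarrow> (\<forall>x. 0 \<le> \<pi> x) \<and> (\<forall>x. x \<notin> C \<longrightarrow> \<pi> x = 0) \<and>
     (\<pi> has_sum 1) C \<and> (\<forall>y\<in>C. ((\<lambda>x. \<pi> x * trans_prob N W p x y) has_sum \<pi> y) C)"

definition Pi_family :: "'a set \<Rightarrow> nat \<Rightarrow> (nat \<Rightarrow> 'a \<Rightarrow> 'a) \<Rightarrow> (nat \<Rightarrow> real) \<Rightarrow> ('a \<Rightarrow> real) set" where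
  "Pi_family S N W p = {\<pi>. \<exists>C. pos_rec_class S N W p C \<and> stationary_on N W p C \<pi>}"

end

theory Submission
  imports Defs
begin


lemma is_norm_convex:
  fixes nrm :: "'a::real_vector \<Rightarrow> real"
  assumes "is_norm nrm" shows "convex_on UNIV nrm"
proof (rule convex_onI)
  show "convex (UNIV::'a set)" by simp
  fix t :: real and x y assume t: "0 < t" "t < 1" and "x \<in> (UNIV::'a set)" "y \<in> (UNIV::'a set)"
  have "nrm ((1 - t) *\<^sub>R x + t *\<^sub>R y) \<le> nrm ((1 - t) *\<^sub>R x) + nrm (t *\<^sub>R y)"
    using assms unfolding is_norm_def by blast
  also have "\<dots> = (1 - t) * nrm x + t * nrm y"
    using assms t unfolding is_norm_def by simp
  finally show "nrm ((1 - t) *\<^sub>R x + t *\<^sub>R y) \<le> (1 - t) * nrm x + t * nrm y" .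
qed

lemma is_norm_equiv:
  fixes nrm :: "'a::euclidean_space \<Rightarrow> real"
  assumes N: "is_norm nrm"
  shows "\<exists>A B. 0 < A \<and> 0 < B \<and> (\<forall>x. norm x \<le> A * nrm x \<and> nrm x \<le> B * norm x)"
proof -
  have cont: "continuous_on (sphere 0 1) nrm"
    using convex_on_continuous[OF open_UNIV is_norm_convex[OF N]] continuous_on_subset by blast
  have ne: "sphere (0::'a) 1 \<noteq> {}"
    using SOME_Basis norm_Basis by (metis empty_iff mem_sphere_0)
  obtain a where a: "a \<in> sphere 0 1" "\<And>y. y \<in> sphere 0 1 \<Longrightarrow> nrm a \<le> nrm y"
    using continuous_attains_inf[OF compact_sphere ne cont] by blast
  obtain b where b: "b \<in> sphere 0 1" "\<And>y. y \<in> sphere 0 1 \<Longrightarrow> nrm y \<le> nrm b"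
    using continuous_attains_sup[OF compact_sphere ne cont] by blast
  have hom: "\<And>c x. nrm (c *\<^sub>R x) = \<bar>c\<bar> * nrm x" and pos: "\<And>x. nrm x = 0 \<longleftrightarrow> x = 0"
    and nn: "\<And>x. 0 \<le> nrm x"
    using N unfolding is_norm_def by auto
  have ap: "nrm a > 0" using a(1) pos nn by (metis less_eq_real_def norm_zero mem_sphere_0 zero_neq_one)
  have bp: "nrm b > 0" using b(1) pos nn by (metis less_eq_real_def norm_zero mem_sphere_0 zero_neq_one)
  have key: "nrm a * norm x \<le> nrm x \<and> nrm x \<le> nrm b * norm x" for x
  proof (cases "x = 0")
    case True then show ?thesis using pos[of 0] by simp
  next
    case False
    define u where "u = (1 / norm x) *\<^sub>R x"
    have u: "u \<in> sphere 0 1" using False by (simp add: u_def)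
    have xu: "x = norm x *\<^sub>R u" using False by (simp add: u_def)
    have "nrm x = norm x * nrm u" by (subst xu, subst hom) simp
    then show ?thesis using a(2)[OF u] b(2)[OF u] by (simp add: mult.commute mult_left_mono)
  qed
  show ?thesis
  proof (intro exI conjI allI)
    show "0 < 1 / nrm a" "0 < nrm b" using ap bp by auto
    fix x
    show "norm x \<le> 1 / nrm a * nrm x" using key[of x] ap by (simp add: field_simps)
    show "nrm x \<le> nrm b * norm x" using key[of x] by simp
  qed
qed



definition idx_pmf :: "nat \<Rightarrow> (nat \<Rightarrow> real) \<Rightarrow> nat pmf" where
  "idx_pmf N p = embed_pmf (\<lambda>i. if i < N then p i else 0)"

lemma idx_pmf:
  assumes p: "\<forall>i<N. 0 \<le> p i" and s: "(\<Sum>i<N. p i) = 1"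
  shows "\<And>i. pmf (idx_pmf N p) i = (if i < N then p i else 0)" "set_pmf (idx_pmf N p) \<subseteq> {..<N}"
proof -
  have "(\<integral>\<^sup>+x. ennreal (if x < N then p x else 0) \<partial>count_space UNIV) = (\<Sum>x\<in>{..<N}. ennreal (if x < N then p x else 0))"
    by (rule nn_integral_count_space') auto
  also have "\<dots> = (\<Sum>x<N. ennreal (p x))" by simp
  also have "\<dots> = ennreal (\<Sum>x<N. p x)" using p by (intro sum_ennreal) auto
  finally have "(\<integral>\<^sup>+x. ennreal (if x < N then p x else 0) \<partial>count_space UNIV) = 1" using s by simp
  moreover have "\<And>x. 0 \<le> (if x < N then p x else 0)" using p by auto
  ultimately show 1: "pmf (idx_pmf N p) i = (if i < N then p i else 0)" for i
    unfolding idx_pmf_def by (subst pmf_embed_pmf) auto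
  show "set_pmf (idx_pmf N p) \<subseteq> {..<N}"
  proof
    fix j assume "j \<in> set_pmf (idx_pmf N p)"
    hence "pmf (idx_pmf N p) j \<noteq> 0" by (simp add: set_pmf_eq)
    then show "j \<in> {..<N}" using 1 by (auto split: if_splits)
  qed
qed

lemma mixture:
  fixes M :: "'a measure" and \<nu> :: "nat \<Rightarrow> 'a measure" and h :: "'a \<Rightarrow> real"
  assumes M: "prob_space M" and nu: "\<forall>i<N. prob_space (\<nu> i)" and nus: "\<forall>i<N. sets (\<nu> i) = sets M"
    and p: "\<forall>i<N. 0 \<le> p i" and s: "(\<Sum>i<N. p i) = 1"
    and mix: "\<forall>A\<in>sets M. emeasure M A = (\<Sum>i<N. ennreal (p i) * emeasure (\<nu> i) A)"
    and h: "h \<in> borel_measurable M" and B: "\<forall>x. \<bar>h x\<bar> \<le> B"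
  shows "integral\<^sup>L M h = (\<Sum>i<N. p i * integral\<^sup>L (\<nu> i) h)"
proof -
  define I where "I = idx_pmf N p"
  define \<nu>' where "\<nu>' i = (if i < N then \<nu> i else M)" for i
  have pI: "pmf I i = (if i < N then p i else 0)" for i using idx_pmf[OF p s] I_def by simp
  have sI: "set_pmf I \<subseteq> {..<N}" using idx_pmf[OF p s] I_def by simp
  have meas: "\<nu>' \<in> measurable (measure_pmf I) (subprob_algebra M)"
    using nu nus M by (auto simp: \<nu>'_def space_subprob_algebra prob_space_imp_subprob_space)
  have eq: "M = measure_pmf I \<bind> \<nu>'"
  proof (rule measure_eqI)
    show "sets M = sets (measure_pmf I \<bind> \<nu>')"
      by (subst sets_bind) (auto simp: \<nu>'_def nus)
    fix A assume A: "A \<in> sets M"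
    have "emeasure (measure_pmf I \<bind> \<nu>') A = (\<integral>\<^sup>+i. emeasure (\<nu>' i) A \<partial>measure_pmf I)"
      by (rule emeasure_bind[OF _ meas A]) simp
    also have "\<dots> = (\<Sum>i\<in>{..<N}. emeasure (\<nu>' i) A * pmf I i)"
      by (rule nn_integral_measure_pmf_support) (use sI in auto)
    also have "\<dots> = (\<Sum>i<N. ennreal (p i) * emeasure (\<nu> i) A)"
      by (intro sum.cong) (auto simp: \<nu>'_def pI mult.commute)
    finally show "emeasure M A = emeasure (measure_pmf I \<bind> \<nu>') A" using mix A by simp
  qed
  have "integral\<^sup>L M h = integral\<^sup>L (measure_pmf I \<bind> \<nu>') h" using eq by simp
  also have "\<dots> = (\<integral>i. integral\<^sup>L (\<nu>' i) h \<partial>measure_pmf I)"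
  proof (rule integral_bind[where K=M and B=B and B'=1])
    show "h \<in> borel_measurable M" by (rule h)
    show "\<And>x. x \<in> space M \<Longrightarrow> \<bar>h x\<bar> \<le> B" using B by auto
    show "\<nu>' \<in> measurable (measure_pmf I) (subprob_algebra M)" by (rule meas)
    show "finite_measure (measure_pmf I)" by (rule measure_pmf.finite_measure_axioms)
    show "AE x in measure_pmf I. emeasure (\<nu>' x) (space (\<nu>' x)) \<le> ennreal 1"
      using nu M by (auto simp: \<nu>'_def prob_space.emeasure_space_1)
  qed
  also have "\<dots> = (\<Sum>i\<in>{..<N}. integral\<^sup>L (\<nu>' i) h * pmf I i)"
    by (rule integral_measure_pmf_real) (use sI in auto)
  also have "\<dots> = (\<Sum>i<N. p i * integral\<^sup>L (\<nu> i) h)"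
    by (intro sum.cong) (auto simp: \<nu>'_def pI mult.commute)
  finally show ?thesis .
qed



lemma nonneg_summable_set_abs:
  fixes f :: "'a \<Rightarrow> real"
  assumes "f summable_on A" "\<And>x. x \<in> A \<Longrightarrow> 0 \<le> f x"
  shows "Infinite_Set_Sum.abs_summable_on f A"
proof -
  have "(\<lambda>x. norm (f x)) summable_on A"
    using assms by (subst summable_on_cong[where g=f]) auto
  then show ?thesis using abs_summable_equivalent by blast
qed

lemma pmf_integral_infsum:
  fixes P :: "'a pmf" and g :: "'a \<Rightarrow> real"
  assumes B: "\<And>x. \<bar>g x\<bar> \<le> B"
  shows "measure_pmf.expectation P g = (\<Sum>\<^sub>\<infinity>x. pmf P x * g x)"
proof -
  have "(\<lambda>x. norm (pmf P x)) summable_on UNIV"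
    using abs_summable_equivalent pmf_abs_summable by blast
  then have "(\<lambda>x. B * norm (pmf P x)) summable_on UNIV" by (rule summable_on_cmult_right)
  then have "(\<lambda>x. norm (pmf P x * g x)) summable_on UNIV"
    by (rule Infinite_Sum.abs_summable_on_comparison_test'[where f="\<lambda>x. pmf P x * g x"])
       (use B in \<open>auto simp: abs_mult mult.commute intro!: mult_right_mono\<close>)
  then have "Infinite_Set_Sum.abs_summable_on (\<lambda>x. pmf P x * g x) UNIV" using abs_summable_equivalent by blast
  then show ?thesis by (simp add: pmf_expectation_eq_infsetsum infsetsum_infsum)
qed

lemma stationary_pmf:
  fixes W :: "nat \<Rightarrow> 'a \<Rightarrow> 'a"
  assumes st: "stationary_on N W p C \<pi>" and p: "\<forall>i<N. 0 \<le> p i" and s: "(\<Sum>i<N. p i) = 1"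
  shows "\<exists>P. (\<forall>x. pmf P x = \<pi> x) \<and>
     (\<forall>g B. (\<forall>x. \<bar>g x\<bar> \<le> B) \<longrightarrow> measure_pmf.expectation P g = measure_pmf.expectation P (\<lambda>x. \<Sum>i<N. p i * g (W i x)))"
proof -
  have nn: "\<And>x. 0 \<le> \<pi> x" and z: "\<And>x. x \<notin> C \<Longrightarrow> \<pi> x = 0" and h1: "(\<pi> has_sum 1) C"
    and stat: "\<And>y. y \<in> C \<Longrightarrow> ((\<lambda>x. \<pi> x * trans_prob N W p x y) has_sum \<pi> y) C"
    using st unfolding stationary_on_def by auto
  have hU: "(\<pi> has_sum 1) UNIV" using h1 z by (subst has_sum_cong_neutral[where T=C]) auto
  have absU: "Infinite_Set_Sum.abs_summable_on \<pi> UNIV"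
    using hU nn by (intro nonneg_summable_set_abs) (auto simp: has_sum_imp_summable)
  have absC: "Infinite_Set_Sum.abs_summable_on \<pi> C"
    using h1 nn by (intro nonneg_summable_set_abs) (auto simp: has_sum_imp_summable)
  have "(\<integral>\<^sup>+x. ennreal (\<pi> x) \<partial>count_space UNIV) = ennreal (infsetsum \<pi> UNIV)"
    using absU nn by (intro nn_integral_conv_infsetsum) auto
  also have "infsetsum \<pi> UNIV = 1" using absU hU by (simp add: infsetsum_infsum infsumI)
  finally have int1: "(\<integral>\<^sup>+x. ennreal (\<pi> x) \<partial>count_space UNIV) = 1" by simp
  define P where "P = embed_pmf \<pi>"
  have pP: "pmf P x = \<pi> x" for x unfolding P_def using nn int1 by (subst pmf_embed_pmf) auto
  define I where "I = idx_pmf N p"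
  have pI: "pmf I i = (if i < N then p i else 0)" for i using idx_pmf[OF p s] I_def by simp
  have sI: "set_pmf I \<subseteq> {..<N}" using idx_pmf[OF p s] I_def by simp
  define K where "K x = map_pmf (\<lambda>i. W i x) I" for x
  define Q where "Q = bind_pmf P K"
  have intK: "measure_pmf.expectation (K x) g = (\<Sum>i<N. p i * g (W i x))" for x and g :: "'a \<Rightarrow> real"
  proof -
    have "measure_pmf.expectation (K x) g = measure_pmf.expectation I (\<lambda>i. g (W i x))"
      by (simp add: K_def)
    also have "\<dots> = (\<Sum>i\<in>{..<N}. g (W i x) * pmf I i)"
      by (rule integral_measure_pmf_real) (use sI in auto)
    also have "\<dots> = (\<Sum>i<N. p i * g (W i x))" by (intro sum.cong) (auto simp: pI)
    finally show ?thesis .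
  qed
  have pK: "pmf (K x) y = trans_prob N W p x y" for x y
  proof -
    have "pmf (K x) y = measure_pmf.expectation (K x) (indicator {y})"
      by (simp add: pmf.rep_eq)
    also have "\<dots> = trans_prob N W p x y" unfolding intK trans_prob_def
      by (intro sum.cong) (auto simp: indicator_def)
    finally show ?thesis .
  qed
  have tb: "\<bar>trans_prob N W p x y\<bar> \<le> 1" for x y
  proof -
    have "0 \<le> trans_prob N W p x y" unfolding trans_prob_def using p by (auto intro!: sum_nonneg)
    moreover have "trans_prob N W p x y \<le> (\<Sum>i<N. p i)" unfolding trans_prob_def using p
      by (intro sum_mono) auto
    ultimately show ?thesis using s by simp
  qed
  have pQ: "pmf Q y = (\<Sum>\<^sub>\<infinity>x. \<pi> x * trans_prob N W p x y)" for y
    unfolding Q_def pmf_bind pK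
    by (subst pmf_integral_infsum[where B=1]) (use tb pP in auto)
  have QC: "pmf Q y = \<pi> y" if "y \<in> C" for y
  proof -
    have "((\<lambda>x. \<pi> x * trans_prob N W p x y) has_sum \<pi> y) UNIV"
      using stat[OF that] z by (subst has_sum_cong_neutral[where T=C]) auto
    then show ?thesis using pQ by (simp add: infsumI)
  qed
  have "measure (measure_pmf Q) C = infsetsum (pmf Q) C" by (rule measure_pmf_conv_infsetsum)
  also have "\<dots> = infsetsum \<pi> C" using QC by (intro infsetsum_cong) auto
  also have "\<dots> = 1" using absC h1 by (simp add: infsetsum_infsum infsumI)
  finally have mC: "measure (measure_pmf Q) C = 1" .
  have QnC: "pmf Q y = 0" if "y \<notin> C" for y
  proof -
    have "measure (measure_pmf Q) (UNIV - C) = 0"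
      using measure_pmf.prob_compl[of C Q] mC by simp
    moreover have "pmf Q y \<le> measure (measure_pmf Q) (UNIV - C)"
      unfolding pmf.rep_eq using that by (intro measure_pmf.finite_measure_mono) auto
    ultimately show ?thesis using pmf_nonneg[of Q y] by linarith
  qed
  have QP: "Q = P" by (rule pmf_eqI) (metis QC QnC pP z)
  show ?thesis
  proof (intro exI conjI allI impI)
    show "pmf P x = \<pi> x" for x by (rule pP)
    fix g :: "'a \<Rightarrow> real" and B assume B: "\<forall>x. \<bar>g x\<bar> \<le> B"
    have "measure_pmf.expectation P g = integral\<^sup>L (measure_pmf Q) g" using QP by simp
    also have "\<dots> = integral\<^sup>L (measure_pmf P \<bind> (\<lambda>x. measure_pmf (K x))) g"
      unfolding Q_def measure_pmf_bind ..
    also have "\<dots> = (\<integral>x. measure_pmf.expectation (K x) g \<partial>measure_pmf P)"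
    proof (rule integral_bind[where K="count_space UNIV" and B=B and B'=1])
      show "g \<in> borel_measurable (count_space UNIV)" by simp
      show "\<And>x. x \<in> space (count_space UNIV) \<Longrightarrow> \<bar>g x\<bar> \<le> B" using B by auto
      show "(\<lambda>x. measure_pmf (K x)) \<in> measurable (measure_pmf P) (subprob_algebra (count_space UNIV))"
        by (auto simp: space_subprob_algebra measure_pmf.subprob_space_axioms)
      show "finite_measure (measure_pmf P)" by (rule measure_pmf.finite_measure_axioms)
      show "AE x in measure_pmf P. emeasure (measure_pmf (K x)) (space (measure_pmf (K x))) \<le> ennreal 1"
        by (simp add: measure_pmf.emeasure_space_1)
    qed
    also have "\<dots> = measure_pmf.expectation P (\<lambda>x. \<Sum>i<N. p i * g (W i x))" by (simp add: intK)
    finally show "measure_pmf.expectation P g = measure_pmf.expectation P (\<lambda>x. \<Sum>i<N. p i * g (W i x))" .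
  qed
qed



definition Top :: "nat \<Rightarrow> (nat \<Rightarrow> 'a \<Rightarrow> 'a) \<Rightarrow> (nat \<Rightarrow> real) \<Rightarrow> ('a \<Rightarrow> real) \<Rightarrow> 'a \<Rightarrow> real" where
  "Top N W p h x = (\<Sum>i<N. p i * h (W i x))"

lemma Top_bound:
  assumes p: "\<forall>i<N. 0 \<le> p i" and s: "(\<Sum>i<N. p i) = 1" and h: "\<forall>x. \<bar>a x - b x\<bar> \<le> c"
  shows "\<bar>Top N W p a x - Top N W p b x\<bar> \<le> c"
proof -
  have "\<bar>Top N W p a x - Top N W p b x\<bar> = \<bar>\<Sum>i<N. p i * (a (W i x) - b (W i x))\<bar>"
    unfolding Top_def by (simp add: sum_subtractf right_diff_distrib)
  also have "\<dots> \<le> (\<Sum>i<N. \<bar>p i * (a (W i x) - b (W i x))\<bar>)" by (rule sum_abs)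
  also have "\<dots> \<le> (\<Sum>i<N. p i * c)"
    using p h by (intro sum_mono) (auto simp: abs_mult intro: mult_left_mono)
  also have "\<dots> = c" using s by (simp add: sum_distrib_right[symmetric])
  finally show ?thesis .
qed

lemma Top_sup:
  assumes p: "\<forall>i<N. 0 \<le> p i" and s: "(\<Sum>i<N. p i) = 1" and h: "\<forall>x. \<bar>h x\<bar> \<le> M"
  shows "\<bar>Top N W p h x\<bar> \<le> M"
  using Top_bound[OF p s, of h "\<lambda>_. 0" M W x] h by (simp add: Top_def)

lemma Top_iter_sup:
  assumes p: "\<forall>i<N. 0 \<le> p i" and s: "(\<Sum>i<N. p i) = 1" and h: "\<forall>x. \<bar>h x\<bar> \<le> M"
  shows "\<bar>(Top N W p ^^ k) h x\<bar> \<le> M"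
  using h by (induction k arbitrary: x) (auto intro!: Top_sup[OF p s])

lemma Top_lip:
  assumes p: "\<forall>i<N. 0 \<le> p i" and s: "(\<Sum>i<N. p i) = 1"
    and Wc: "\<forall>i<N. \<forall>x y. d (W i x) (W i y) \<le> c * d x y"
    and h: "\<forall>x y. \<bar>h x - h y\<bar> \<le> L * d x y" and L: "0 \<le> L"
  shows "\<bar>Top N W p h x - Top N W p h y\<bar> \<le> (L * c) * d x y"
proof -
  have "\<bar>Top N W p h x - Top N W p h y\<bar> = \<bar>\<Sum>i<N. p i * (h (W i x) - h (W i y))\<bar>"
    unfolding Top_def by (simp add: sum_subtractf right_diff_distrib)
  also have "\<dots> \<le> (\<Sum>i<N. \<bar>p i * (h (W i x) - h (W i y))\<bar>)" by (rule sum_abs)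
  also have "\<dots> \<le> (\<Sum>i<N. p i * ((L * c) * d x y))"
  proof (intro sum_mono)
    fix i assume i: "i \<in> {..<N}"
    have "\<bar>h (W i x) - h (W i y)\<bar> \<le> L * d (W i x) (W i y)" using h by blast
    also have "\<dots> \<le> L * (c * d x y)" using Wc i L by (auto intro: mult_left_mono)
    finally show "\<bar>p i * (h (W i x) - h (W i y))\<bar> \<le> p i * ((L * c) * d x y)"
      using p i by (auto simp: abs_mult intro: mult_left_mono)
  qed
  also have "\<dots> = (L * c) * d x y" using s by (simp add: sum_distrib_right[symmetric])
  finally show ?thesis .
qed

lemma Top_iter_lip:
  assumes p: "\<forall>i<N. 0 \<le> p i" and s: "(\<Sum>i<N. p i) = 1"
    and Wc: "\<forall>i<N. \<forall>x y. d (W i x) (W i y) \<le> c * d x y" and c: "0 \<le> c"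
    and h: "\<forall>x y. \<bar>h x - h y\<bar> \<le> L * d x y" and L: "0 \<le> L"
  shows "\<bar>(Top N W p ^^ k) h x - (Top N W p ^^ k) h y\<bar> \<le> (L * c ^ k) * d x y"
proof (induction k arbitrary: x y)
  case 0 then show ?case using h by simp
next
  case (Suc k)
  have "\<bar>Top N W p ((Top N W p ^^ k) h) x - Top N W p ((Top N W p ^^ k) h) y\<bar> \<le> ((L * c ^ k) * c) * d x y"
    by (rule Top_lip[OF p s Wc]) (use Suc L c in auto)
  then show ?case by (simp add: mult_ac)
qed

lemma Top_diff:
  assumes p: "\<forall>i<N. 0 \<le> p i" and s: "(\<Sum>i<N. p i) = 1"
    and Ve: "\<forall>i<N. \<forall>x. d (V i x) (W i x) \<le> e"
    and h: "\<forall>x y. \<bar>h x - h y\<bar> \<le> L * d x y" and L: "0 \<le> L"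
  shows "\<bar>Top N V p h x - Top N W p h x\<bar> \<le> L * e"
proof -
  have "\<bar>Top N V p h x - Top N W p h x\<bar> = \<bar>\<Sum>i<N. p i * (h (V i x) - h (W i x))\<bar>"
    unfolding Top_def by (simp add: sum_subtractf right_diff_distrib)
  also have "\<dots> \<le> (\<Sum>i<N. \<bar>p i * (h (V i x) - h (W i x))\<bar>)" by (rule sum_abs)
  also have "\<dots> \<le> (\<Sum>i<N. p i * (L * e))"
  proof (intro sum_mono)
    fix i assume i: "i \<in> {..<N}"
    have "\<bar>h (V i x) - h (W i x)\<bar> \<le> L * d (V i x) (W i x)" using h by blast
    also have "\<dots> \<le> L * e" using Ve i L by (auto intro: mult_left_mono)
    finally show "\<bar>p i * (h (V i x) - h (W i x))\<bar> \<le> p i * (L * e)"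
      using p i by (auto simp: abs_mult intro: mult_left_mono)
  qed
  also have "\<dots> = L * e" using s by (simp add: sum_distrib_right[symmetric])
  finally show ?thesis .
qed

lemma Top_iter_diff:
  assumes p: "\<forall>i<N. 0 \<le> p i" and s: "(\<Sum>i<N. p i) = 1"
    and Wc: "\<forall>i<N. \<forall>x y. d (W i x) (W i y) \<le> c * d x y" and c: "0 \<le> c"
    and Ve: "\<forall>i<N. \<forall>x. d (V i x) (W i x) \<le> e"
    and h: "\<forall>x y. \<bar>h x - h y\<bar> \<le> L * d x y" and L: "0 \<le> L"
  shows "\<bar>(Top N V p ^^ k) h x - (Top N W p ^^ k) h x\<bar> \<le> L * e * (\<Sum>j<k. c ^ j)"
proof (induction k arbitrary: x)
  case 0 then show ?case by simp
next
  case (Suc k)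
  have 1: "\<bar>Top N V p ((Top N V p ^^ k) h) x - Top N V p ((Top N W p ^^ k) h) x\<bar> \<le> L * e * (\<Sum>j<k. c ^ j)"
    by (rule Top_bound[OF p s]) (use Suc in auto)
  have 2: "\<bar>Top N V p ((Top N W p ^^ k) h) x - Top N W p ((Top N W p ^^ k) h) x\<bar> \<le> (L * c ^ k) * e"
    by (rule Top_diff[where d=d, OF p s Ve]) (use Top_iter_lip[OF p s Wc c h L] L c in auto)
  have "\<bar>(Top N V p ^^ Suc k) h x - (Top N W p ^^ Suc k) h x\<bar>
     \<le> \<bar>Top N V p ((Top N V p ^^ k) h) x - Top N V p ((Top N W p ^^ k) h) x\<bar>
       + \<bar>Top N V p ((Top N W p ^^ k) h) x - Top N W p ((Top N W p ^^ k) h) x\<bar>" by simp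
  also have "\<dots> \<le> L * e * (\<Sum>j<k. c ^ j) + (L * c ^ k) * e" using 1 2 by linarith
  also have "\<dots> = L * e * (\<Sum>j<Suc k. c ^ j)" by (simp add: algebra_simps)
  finally show ?case .
qed

lemma dom_conv0:
  fixes h :: "nat \<Rightarrow> 'a \<Rightarrow> real"
  assumes M: "prob_space M" and meas: "\<And>k. h k \<in> borel_measurable M"
    and B: "\<And>k x. \<bar>h k x\<bar> \<le> B" and lim: "\<And>x. x \<in> space M \<Longrightarrow> (\<lambda>k. h k x) \<longlonglongrightarrow> 0"
  shows "(\<lambda>k. integral\<^sup>L M (h k)) \<longlonglongrightarrow> 0"
proof -
  interpret prob_space M by (rule M)
  have "(\<lambda>k. integral\<^sup>L M (h k)) \<longlonglongrightarrow> integral\<^sup>L M (\<lambda>x. 0)"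
    by (rule integral_dominated_convergence[where w="\<lambda>_. B"]) (use meas B lim in auto)
  then show ?thesis by simp
qed



lemma int_abs_le:
  fixes f phi :: "'a \<Rightarrow> real"
  assumes M: "prob_space M" and fm: "f \<in> borel_measurable M" and pm: "phi \<in> borel_measurable M"
    and le: "\<And>x. \<bar>f x\<bar> \<le> phi x" and B: "\<And>x. phi x \<le> B"
  shows "\<bar>integral\<^sup>L M f\<bar> \<le> integral\<^sup>L M phi"
proof -
  interpret prob_space M by (rule M)
  have if': "integrable M f"
    by (rule integrable_const_bound[where B=B]) (use fm le B in \<open>auto intro: order_trans\<close>)
  have ip: "integrable M phi"
  proof (rule integrable_const_bound[where B=B])
    show "AE x in M. norm (phi x) \<le> B" using le B
      by (auto intro!: AE_I2) (metis abs_ge_zero abs_of_nonneg order_trans)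
  qed (rule pm)
  have "\<bar>integral\<^sup>L M f\<bar> = norm (integral\<^sup>L M f)" by simp
  also have "\<dots> \<le> integral\<^sup>L M (\<lambda>x. norm (f x))" by (rule integral_norm_bound)
  also have "\<dots> \<le> integral\<^sup>L M phi"
    by (rule integral_mono) (use if' ip le in auto)
  finally show ?thesis .
qed

lemma int_const_le:
  fixes f :: "'a \<Rightarrow> real"
  assumes M: "prob_space M" and fm: "f \<in> borel_measurable M" and le: "\<And>x. \<bar>f x\<bar> \<le> B"
  shows "\<bar>integral\<^sup>L M f\<bar> \<le> B"
proof -
  interpret prob_space M by (rule M)
  have "\<bar>integral\<^sup>L M f\<bar> \<le> integral\<^sup>L M (\<lambda>_. B)"
    by (rule int_abs_le[OF M fm]) (use le in auto)
  then show ?thesis by (simp add: prob_space)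
qed

lemma main_est:
  fixes M1 M2 :: "'a measure" and g :: "'a \<Rightarrow> real"
  assumes M1: "prob_space M1" and M2: "prob_space M2"
    and p: "\<forall>i<N. 0 \<le> p i" and s: "(\<Sum>i<N. p i) = 1"
    and Wc: "\<forall>i<N. \<forall>x y. d (W i x) (W i y) \<le> c * d x y" and c: "0 \<le> c" and c1: "c < 1"
    and dnn: "\<forall>x y. 0 \<le> d x y"
    and Ve: "\<forall>i<N. \<forall>x. d (V i x) (W i x) \<le> e"
    and gM: "\<forall>x. \<bar>g x\<bar> \<le> M" and gL: "\<forall>x y. \<bar>g x - g y\<bar> \<le> L * d x y" and L: "0 \<le> L"
    and inv1: "\<forall>h. (\<forall>x. \<bar>h x\<bar> \<le> M) \<longrightarrow> h \<in> borel_measurable M1 \<longrightarrow> integral\<^sup>L M1 h = integral\<^sup>L M1 (Top N V p h)"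
    and inv2: "\<forall>h. (\<forall>x. \<bar>h x\<bar> \<le> M) \<longrightarrow> h \<in> borel_measurable M2 \<longrightarrow> integral\<^sup>L M2 h = integral\<^sup>L M2 (Top N W p h)"
    and m1: "\<forall>k. (Top N V p ^^ k) g \<in> borel_measurable M1 \<and> (Top N W p ^^ k) g \<in> borel_measurable M1"
    and m2: "\<forall>k. (Top N W p ^^ k) g \<in> borel_measurable M2"
    and dm1: "(\<lambda>x. d x zz) \<in> borel_measurable M1" and dm2: "(\<lambda>x. d x zz) \<in> borel_measurable M2"
  shows "\<bar>integral\<^sup>L M1 g - integral\<^sup>L M2 g\<bar> \<le> L * e / (1 - c)"
proof -
  have "N \<noteq> 0" using s by (cases N) auto
  then have "0 \<le> e" using Ve dnn by (meson order_trans zero_less_iff_neq_zero)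
  have M0: "0 \<le> M" using gM by (meson abs_ge_zero order_trans)
  have I1: "integral\<^sup>L M1 g = integral\<^sup>L M1 ((Top N V p ^^ k) g)" for k
  proof (induction k)
    case (Suc k)
    then show ?case using inv1 Top_iter_sup[OF p s gM] m1 by simp
  qed simp
  have I2: "integral\<^sup>L M2 g = integral\<^sup>L M2 ((Top N W p ^^ k) g)" for k
  proof (induction k)
    case (Suc k)
    then show ?case using inv2 Top_iter_sup[OF p s gM] m2 by simp
  qed simp
  define u where "u k = (Top N W p ^^ k) g" for k
  define phi where "phi k x = min (2 * M) (L * c ^ k * d x zz)" for k x
  have uphi: "\<bar>u k x - u k zz\<bar> \<le> phi k x" for k x
  proof -
    have "\<bar>u k x - u k zz\<bar> \<le> 2 * M"
      using Top_iter_sup[OF p s gM, where W=W and k=k and x=x] Top_iter_sup[OF p s gM, where W=W and k=k and x=zz] unfolding u_def by linarith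
    moreover have "\<bar>u k x - u k zz\<bar> \<le> L * c ^ k * d x zz"
      unfolding u_def by (rule Top_iter_lip[OF p s Wc c gL L])
    ultimately show ?thesis unfolding phi_def by simp
  qed
  have phim1: "phi k \<in> borel_measurable M1" for k unfolding phi_def using dm1 by measurable
  have phim2: "phi k \<in> borel_measurable M2" for k unfolding phi_def using dm2 by measurable
  have phiB: "\<bar>phi k x\<bar> \<le> 2 * M" for k x
  proof -
    have "0 \<le> L * c ^ k * d x zz" using dnn L c by simp
    then show ?thesis unfolding phi_def using M0 by (auto simp: abs_if)
  qed
  have philim: "(\<lambda>k. phi k x) \<longlonglongrightarrow> 0" for x
  proof -
    have "(\<lambda>k. c ^ k) \<longlonglongrightarrow> 0" by (rule LIMSEQ_power_zero) (use c c1 in simp)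
    then have "(\<lambda>k. L * c ^ k * d x zz) \<longlonglongrightarrow> L * 0 * d x zz"
      by (intro tendsto_mult tendsto_const)
    then have "(\<lambda>k. min (2 * M) (L * c ^ k * d x zz)) \<longlonglongrightarrow> min (2 * M) (L * 0 * d x zz)"
      by (rule tendsto_min[OF tendsto_const])
    then show ?thesis using M0 unfolding phi_def by simp
  qed
  have A: "(\<lambda>k. integral\<^sup>L M1 (phi k)) \<longlonglongrightarrow> 0"
    by (rule dom_conv0[OF M1 phim1 phiB philim])
  have B: "(\<lambda>k. integral\<^sup>L M2 (phi k)) \<longlonglongrightarrow> 0"
    by (rule dom_conv0[OF M2 phim2 phiB philim])
  have geo: "L * e * (\<Sum>j<k. c ^ j) \<le> L * e / (1 - c)" for k
  proof -
    have "(\<Sum>j<k. c ^ j) = (1 - c ^ k) / (1 - c)" using c1 by (simp add: sum_gp_strict)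
    also have "\<dots> \<le> 1 / (1 - c)" using c c1 by (intro divide_right_mono) auto
    finally have "L * e * (\<Sum>j<k. c ^ j) \<le> L * e * (1 / (1 - c))" using \<open>0 \<le> e\<close> L by (intro mult_left_mono) auto
    then show ?thesis by simp
  qed
  have bound: "\<bar>integral\<^sup>L M1 g - integral\<^sup>L M2 g\<bar> \<le> L * e / (1 - c) + (integral\<^sup>L M1 (phi k) + integral\<^sup>L M2 (phi k))" for k
  proof -
    interpret P1: prob_space M1 by (rule M1)
    interpret P2: prob_space M2 by (rule M2)
    have mV: "(Top N V p ^^ k) g \<in> borel_measurable M1" and mW1: "u k \<in> borel_measurable M1"
      and mW2: "u k \<in> borel_measurable M2" using m1 m2 unfolding u_def by auto
    have int1: "integrable M1 ((Top N V p ^^ k) g)"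
      by (rule P1.integrable_const_bound[where B=M]) (use mV Top_iter_sup[OF p s gM] in auto)
    have int2: "integrable M1 (u k)"
      by (rule P1.integrable_const_bound[where B=M]) (use mW1 Top_iter_sup[OF p s gM] in \<open>auto simp: u_def\<close>)
    have int3: "integrable M2 (u k)"
      by (rule P2.integrable_const_bound[where B=M]) (use mW2 Top_iter_sup[OF p s gM] in \<open>auto simp: u_def\<close>)
    have t1: "\<bar>integral\<^sup>L M1 (\<lambda>x. (Top N V p ^^ k) g x - u k x)\<bar> \<le> L * e / (1 - c)"
    proof (rule int_const_le[OF M1])
      show "(\<lambda>x. (Top N V p ^^ k) g x - u k x) \<in> borel_measurable M1" using mV mW1 by measurable
      show "\<bar>(Top N V p ^^ k) g x - u k x\<bar> \<le> L * e / (1 - c)" for x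
        using Top_iter_diff[OF p s Wc c Ve gL L, of k x] geo[of k] unfolding u_def by linarith
    qed
    have t2: "\<bar>integral\<^sup>L M1 (\<lambda>x. u k x - u k zz)\<bar> \<le> integral\<^sup>L M1 (phi k)"
      by (rule int_abs_le[OF M1 _ phim1 uphi]) (use mW1 phiB in \<open>auto simp: abs_le_iff\<close>)
    have t3: "\<bar>integral\<^sup>L M2 (\<lambda>x. u k x - u k zz)\<bar> \<le> integral\<^sup>L M2 (phi k)"
      by (rule int_abs_le[OF M2 _ phim2 uphi]) (use mW2 phiB in \<open>auto simp: abs_le_iff\<close>)
    have e1: "integral\<^sup>L M1 (\<lambda>x. (Top N V p ^^ k) g x - u k x) = integral\<^sup>L M1 ((Top N V p ^^ k) g) - integral\<^sup>L M1 (u k)"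
      using int1 int2 by simp
    have e2: "integral\<^sup>L M1 (\<lambda>x. u k x - u k zz) = integral\<^sup>L M1 (u k) - u k zz"
      using int2 by (simp add: P1.prob_space)
    have e3: "integral\<^sup>L M2 (\<lambda>x. u k x - u k zz) = integral\<^sup>L M2 (u k) - u k zz"
      using int3 by (simp add: P2.prob_space)
    have "integral\<^sup>L M1 g - integral\<^sup>L M2 g = integral\<^sup>L M1 ((Top N V p ^^ k) g) - integral\<^sup>L M2 (u k)"
      using I1 I2 unfolding u_def by simp
    then show ?thesis using t1 t2 t3 e1 e2 e3 by linarith
  qed
  have lim: "(\<lambda>k. L * e / (1 - c) + (integral\<^sup>L M1 (phi k) + integral\<^sup>L M2 (phi k))) \<longlonglongrightarrow> L * e / (1 - c) + (0 + 0)"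
    by (intro tendsto_intros A B)
  then have lim2: "(\<lambda>k. L * e / (1 - c) + (integral\<^sup>L M1 (phi k) + integral\<^sup>L M2 (phi k))) \<longlonglongrightarrow> L * e / (1 - c)"
    by simp
  show ?thesis
    by (rule LIMSEQ_le_const[OF lim2]) (use bound in auto)
qed



lemma lip_cont:
  fixes g :: "'a::metric_space \<Rightarrow> real"
  assumes "\<forall>x y. \<bar>g x - g y\<bar> \<le> L * dist x y" and "0 \<le> L"
  shows "continuous_on UNIV g"
  by (rule lipschitz_on_continuous_on[of L]) (use assms in \<open>auto intro!: lipschitz_onI simp: dist_real_def\<close>)

definition infconv :: "('a::metric_space \<Rightarrow> real) \<Rightarrow> nat \<Rightarrow> 'a \<Rightarrow> real" where
  "infconv f k x = Inf (range (\<lambda>y. f y + real k * dist x y))"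

lemma infconv_props:
  fixes f :: "'a::metric_space \<Rightarrow> real"
  assumes fc: "continuous_on UNIV f" and fM: "\<forall>x. \<bar>f x\<bar> \<le> M0"
  shows "infconv f k x \<le> f x" "\<bar>infconv f k x\<bar> \<le> M0"
    "\<forall>x y. \<bar>infconv f k x - infconv f k y\<bar> \<le> real k * dist x y"
    "(\<lambda>k. infconv f k x) \<longlonglongrightarrow> f x"
proof -
  have bdd: "bdd_below (range (\<lambda>y. f y + real k * dist x y))" for k x
  proof (intro bdd_belowI[where m="-M0"])
    fix z assume "z \<in> range (\<lambda>y. f y + real k * dist x y)"
    then obtain y where y: "z = f y + real k * dist x y" by auto
    have "0 \<le> real k * dist x y" by simp
    moreover have "-M0 \<le> f y" using fM[rule_format, of y] by (simp add: abs_le_iff)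
    ultimately show "- M0 \<le> z" using y by linarith
  qed
  have le: "infconv f k x \<le> f y + real k * dist x y" for k x y
    unfolding infconv_def by (rule cInf_lower[OF _ bdd]) auto
  have ge: "c \<le> infconv f k x" if "\<And>y. c \<le> f y + real k * dist x y" for c k x
    unfolding infconv_def by (rule cInf_greatest) (use that in auto)
  show up: "infconv f k x \<le> f x" for k x using le[of k x x] by simp
  have lo: "- M0 \<le> infconv f k x" for k x
  proof (rule ge)
    fix y
    have "0 \<le> real k * dist x y" by simp
    moreover have "-M0 \<le> f y" using fM[rule_format, of y] by (simp add: abs_le_iff)
    ultimately show "- M0 \<le> f y + real k * dist x y" by linarith
  qed
  show "\<bar>infconv f k x\<bar> \<le> M0" using up[of k x] lo[of k x] fM[rule_format, of x] by (auto simp: abs_le_iff)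
  have one: "infconv f k x \<le> infconv f k y + real k * dist x y" for x y
  proof -
    have "infconv f k x - real k * dist x y \<le> infconv f k y"
    proof (rule ge)
      fix z
      have "infconv f k x \<le> f z + real k * dist x z" by (rule le)
      also have "\<dots> \<le> f z + real k * (dist y z + dist x y)"
        by (intro add_left_mono mult_left_mono) (use dist_triangle[of x z y] in \<open>auto simp: add.commute\<close>)
      finally show "infconv f k x - real k * dist x y \<le> f z + real k * dist y z" by (simp add: algebra_simps)
    qed
    then show ?thesis by simp
  qed
  show "\<forall>x y. \<bar>infconv f k x - infconv f k y\<bar> \<le> real k * dist x y"
    using one by (metis abs_le_iff add.commute diff_le_eq dist_commute minus_diff_eq)
  show "(\<lambda>k. infconv f k x) \<longlonglongrightarrow> f x"
  proof (rule LIMSEQ_I)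
    fix r :: real assume r: "0 < r"
    obtain d where d: "d > 0" "\<And>y. dist y x < d \<Longrightarrow> dist (f y) (f x) < r / 2"
      using fc r unfolding continuous_on_iff by (metis UNIV_I half_gt_zero)
    obtain K :: nat where K: "2 * M0 / d < real K" using reals_Archimedean2 by blast
    have "norm (infconv f k x - f x) < r" if k: "K \<le> k" for k
    proof -
      have "f x - r / 2 \<le> infconv f k x"
      proof (rule ge)
        fix y
        show "f x - r / 2 \<le> f y + real k * dist x y"
        proof (cases "dist y x < d")
          case True
          have "\<bar>f y - f x\<bar> < r / 2" using d(2)[OF True] by (simp add: dist_real_def)
          then have "f x - r / 2 < f y" by linarith
          then show ?thesis by (smt (verit) mult_nonneg_nonneg of_nat_0_le_iff zero_le_dist)
        next
          case False
          have "2 * M0 \<le> real K * d" using K d(1) by (simp add: field_simps)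
          also have "\<dots> \<le> real k * dist x y" using False k d(1)
            by (intro mult_mono) (auto simp: dist_commute)
          finally show ?thesis using fM[rule_format, of x] fM[rule_format, of y] r by (auto simp: abs_le_iff)
        qed
      qed
      then show ?thesis using up[of k x] r by auto
    qed
    then show "\<exists>no. \<forall>n\<ge>no. norm (infconv f n x - f x) < r" by blast
  qed
qed

lemma portmanteau_lower:
  fixes F :: "real \<Rightarrow> ('a::metric_space \<Rightarrow> real) \<Rightarrow> real" and \<mu> :: "'a measure"
  assumes ps: "prob_space \<mu>" and sets_mu: "sets \<mu> = sets borel"
    and mono: "\<forall>\<delta>>0. \<forall>h1 h2 B1 B2. (\<forall>x. h1 x \<le> h2 x) \<longrightarrow> (\<forall>x. \<bar>h1 x\<bar> \<le> B1) \<longrightarrow> (\<forall>x. \<bar>h2 x\<bar> \<le> B2) \<longrightarrow> F \<delta> h1 \<le> F \<delta> h2"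
    and lip: "\<forall>g L M. 0 \<le> L \<longrightarrow> (\<forall>x y. \<bar>g x - g y\<bar> \<le> L * dist x y) \<longrightarrow> (\<forall>x. \<bar>g x\<bar> \<le> M) \<longrightarrow> ((\<lambda>\<delta>. F \<delta> g) \<longlongrightarrow> integral\<^sup>L \<mu> g) (at_right 0)"
    and fc: "continuous_on UNIV f" and fM: "\<forall>x. \<bar>f x\<bar> \<le> M0" and a: "a < integral\<^sup>L \<mu> f"
  shows "eventually (\<lambda>\<delta>. a < F \<delta> f) (at_right 0)"
proof -
  note P = infconv_props[OF fc fM]
  have meas: "infconv f k \<in> borel_measurable \<mu>" for k
  proof -
    have "continuous_on UNIV (infconv f k)" by (rule lip_cont[OF P(3)]) simp
    then have "infconv f k \<in> borel_measurable borel" by (rule borel_measurable_continuous_onI)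
    then show ?thesis using sets_mu measurable_cong_sets by blast
  qed
  have fmeas: "f \<in> borel_measurable \<mu>"
    using borel_measurable_continuous_onI[OF fc] sets_mu measurable_cong_sets by blast
  have "(\<lambda>k. integral\<^sup>L \<mu> (\<lambda>x. infconv f k x - f x)) \<longlonglongrightarrow> 0"
  proof (rule dom_conv0[OF ps, where B="2 * M0"])
    show "(\<lambda>x. infconv f k x - f x) \<in> borel_measurable \<mu>" for k using meas fmeas by measurable
    show "\<bar>infconv f k x - f x\<bar> \<le> 2 * M0" for k x using P(2)[of k x] fM[rule_format, of x] by (auto simp: abs_le_iff)
    show "(\<lambda>k. infconv f k x - f x) \<longlonglongrightarrow> 0" for x
      using P(4)[of x] by (simp add: LIM_zero_iff)
  qed
  moreover have "integral\<^sup>L \<mu> (\<lambda>x. infconv f k x - f x) = integral\<^sup>L \<mu> (infconv f k) - integral\<^sup>L \<mu> f" for k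
  proof -
    interpret prob_space \<mu> by (rule ps)
    have "integrable \<mu> (infconv f k)"
      by (rule integrable_const_bound[where B=M0]) (use meas P(2) in auto)
    moreover have "integrable \<mu> f"
      by (rule integrable_const_bound[where B=M0]) (use fmeas fM in auto)
    ultimately show ?thesis by simp
  qed
  ultimately have "(\<lambda>k. integral\<^sup>L \<mu> (infconv f k) - integral\<^sup>L \<mu> f) \<longlonglongrightarrow> 0" by simp
  then have "(\<lambda>k. integral\<^sup>L \<mu> (infconv f k)) \<longlonglongrightarrow> integral\<^sup>L \<mu> f" by (simp add: LIM_zero_iff)
  then have "eventually (\<lambda>k. (a + integral\<^sup>L \<mu> f) / 2 < integral\<^sup>L \<mu> (infconv f k)) sequentially"
    using a by (intro order_tendstoD(1)) auto
  then obtain k where k: "(a + integral\<^sup>L \<mu> f) / 2 < integral\<^sup>L \<mu> (infconv f k)"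
    using eventually_sequentially by auto
  have "((\<lambda>\<delta>. F \<delta> (infconv f k)) \<longlongrightarrow> integral\<^sup>L \<mu> (infconv f k)) (at_right 0)"
    by (rule lip[rule_format, of "real k" "infconv f k" M0]) (use P(3)[of k] P(2)[of k] in auto)
  then have ev: "eventually (\<lambda>\<delta>. (a + integral\<^sup>L \<mu> f) / 2 < F \<delta> (infconv f k)) (at_right 0)"
    using k by (intro order_tendstoD(1)) auto
  have ev2: "eventually (\<lambda>\<delta>. 0 < \<delta>) (at_right (0::real))" by (simp add: eventually_at_right_less)
  show ?thesis
  proof (rule eventually_mono[OF eventually_conj[OF ev ev2]])
    fix \<delta> :: real assume h: "(a + integral\<^sup>L \<mu> f) / 2 < F \<delta> (infconv f k) \<and> 0 < \<delta>"
    have "F \<delta> (infconv f k) \<le> F \<delta> f"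
      using mono h P(1) P(2) fM by blast
    moreover have "a < (a + integral\<^sup>L \<mu> f) / 2" using a by simp
    ultimately show "a < F \<delta> f" using conjunct1[OF h] by (meson order.strict_trans order.strict_trans2)
  qed
qed



lemma roundoff_err:
  fixes z :: "real^'n"
  assumes d: "0 < \<delta>"
  shows "norm (roundoff \<delta> z - z) \<le> real CARD('n) * \<delta> / 2"
proof -
  have comp: "\<bar>(roundoff \<delta> z - z) $ j\<bar> \<le> \<delta> / 2" for j
  proof -
    define t where "t = z $ j / \<delta>"
    have zt: "z $ j = \<delta> * t" using d by (simp add: t_def)
    have f1: "of_int \<lfloor>t + 1/2\<rfloor> \<le> t + 1/2" by (rule of_int_floor_le)
    have f2: "t + 1/2 < of_int \<lfloor>t + 1/2\<rfloor> + 1" by (rule real_of_int_floor_add_one_gt)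
    have e: "(roundoff \<delta> z - z) $ j = \<delta> * (of_int \<lfloor>t + 1/2\<rfloor> - t)"
      by (simp add: roundoff_def t_def[symmetric] zt right_diff_distrib)
    have a: "\<bar>of_int \<lfloor>t + 1/2\<rfloor> - t\<bar> \<le> (1::real)/2" using f1 f2 unfolding abs_le_iff by linarith
    have "\<bar>(roundoff \<delta> z - z) $ j\<bar> = \<delta> * \<bar>of_int \<lfloor>t + 1/2\<rfloor> - t\<bar>" using d e by (simp add: abs_mult)
    also have "\<dots> \<le> \<delta> * (1/2)" using d a by (intro mult_left_mono) auto
    finally show ?thesis by simp
  qed
  have "norm (roundoff \<delta> z - z) \<le> (\<Sum>j\<in>UNIV. \<bar>(roundoff \<delta> z - z) $ j\<bar>)" by (rule norm_le_l1_cart)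
  also have "\<dots> \<le> (\<Sum>j\<in>(UNIV::'n set). \<delta> / 2)" by (intro sum_mono comp)
  also have "\<dots> = real CARD('n) * \<delta> / 2" by simp
  finally show ?thesis .
qed

lemma mu_inv:
  fixes \<mu> :: "(real^'n) measure" and w :: "nat \<Rightarrow> real^'n \<Rightarrow> real^'n" and h :: "real^'n \<Rightarrow> real"
  assumes ps: "prob_space \<mu>" and sets_mu: "sets \<mu> = sets borel"
    and inv: "\<forall>A\<in>sets borel. emeasure \<mu> A = (\<Sum>i<N. ennreal (p i) * emeasure \<mu> (w i -` A))"
    and wm: "\<forall>i<N. w i \<in> borel_measurable borel"
    and p: "\<forall>i<N. 0 \<le> p i" and s: "(\<Sum>i<N. p i) = 1"
    and hm: "h \<in> borel_measurable \<mu>" and hB: "\<forall>x. \<bar>h x\<bar> \<le> M"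
  shows "integral\<^sup>L \<mu> h = integral\<^sup>L \<mu> (Top N w p h)"
proof -
  interpret prob_space \<mu> by (rule ps)
  have sp: "space \<mu> = UNIV" using sets_eq_imp_space_eq[OF sets_mu] by simp
  have wm': "w i \<in> measurable \<mu> borel" if "i < N" for i
    using wm that measurable_cong_sets[OF sets_mu refl] by blast
  have hb: "h \<in> borel_measurable borel" using hm measurable_cong_sets[OF sets_mu refl] by blast
  have "integral\<^sup>L \<mu> h = (\<Sum>i<N. p i * integral\<^sup>L (distr \<mu> borel (w i)) h)"
  proof (rule mixture[OF ps _ _ p s _ hm])
    show "\<forall>i<N. prob_space (distr \<mu> borel (w i))" using wm' by (auto intro: prob_space_distr)
    show "\<forall>i<N. sets (distr \<mu> borel (w i)) = sets \<mu>" using sets_mu by simp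
    show "\<forall>A\<in>sets \<mu>. emeasure \<mu> A = (\<Sum>i<N. ennreal (p i) * emeasure (distr \<mu> borel (w i)) A)"
      using inv sets_mu wm' sp by (auto simp: emeasure_distr intro!: sum.cong)
    show "\<forall>x. \<bar>h x\<bar> \<le> M" by (rule hB)
  qed
  also have "\<dots> = (\<Sum>i<N. p i * integral\<^sup>L \<mu> (\<lambda>x. h (w i x)))"
    using wm' hb by (intro sum.cong refl) (simp add: integral_distr)
  also have "\<dots> = (\<Sum>i<N. integral\<^sup>L \<mu> (\<lambda>x. p i * h (w i x)))" by simp
  also have "\<dots> = integral\<^sup>L \<mu> (\<lambda>x. \<Sum>i<N. p i * h (w i x))"
  proof (rule sym, rule Bochner_Integration.integral_sum)
    fix i assume i: "i \<in> {..<N}"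
    have "(\<lambda>x. h (w i x)) \<in> borel_measurable \<mu>" using wm'[of i] i hb by simp measurable
    then have "integrable \<mu> (\<lambda>x. h (w i x))"
      by (rule integrable_const_bound[where B=M, rotated]) (use hB in auto)
    then show "integrable \<mu> (\<lambda>x. p i * h (w i x))" by simp
  qed
  also have "(\<lambda>x. \<Sum>i<N. p i * h (w i x)) = Top N w p h" by (rule ext) (simp add: Top_def)
  finally show ?thesis .
qed



theorem theorem15:
  fixes nrm :: "real^'n \<Rightarrow> real"
    and N :: nat
    and w :: "nat \<Rightarrow> real^'n \<Rightarrow> real^'n"
    and p :: "nat \<Rightarrow> real"
    and \<mu> :: "(real^'n) measure"
    and f :: "real^'n \<Rightarrow> real"
    and sel :: "real \<Rightarrow> real^'n \<Rightarrow> real"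
  assumes norm: "is_norm nrm"
    and contr: "\<forall>i<N. \<exists>s<1. \<forall>x y. nrm (w i x - w i y) \<le> s * nrm (x - y)"
    and prob: "\<forall>i<N. 0 < p i \<and> p i \<le> 1"
    and sum1: "(\<Sum>i<N. p i) = 1"
    and ps: "prob_space \<mu>"
    and sets_mu: "sets \<mu> = sets borel"
    and inv: "\<forall>A\<in>sets borel. emeasure \<mu> A = (\<Sum>i<N. ennreal (p i) * emeasure \<mu> (w i -` A))"
    and cont: "continuous_on UNIV f"
    and bdd: "bounded (range f)"
    and sel: "\<forall>\<delta>>0. sel \<delta> \<in> Pi_family (lattice \<delta>) N (\<lambda>i x. roundoff \<delta> (w i x)) p"
  shows "((\<lambda>\<delta>. \<Sum>\<^sub>\<infinity>x\<in>lattice \<delta>. f x * sel \<delta> x) \<longlongrightarrow> integral\<^sup>L \<mu> f) (at_right 0)"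
proof -
  obtain A B where AB: "0 < A" "0 < B" "\<And>x. norm x \<le> A * nrm x" "\<And>x. nrm x \<le> B * norm x"
    using is_norm_equiv[OF norm] by blast
  have nn: "\<And>x. 0 \<le> nrm x" using norm unfolding is_norm_def by blast
  have p: "\<forall>i<N. 0 \<le> p i" using prob by auto
  have "\<forall>i. \<exists>s. i < N \<longrightarrow> s < 1 \<and> (\<forall>x y. nrm (w i x - w i y) \<le> s * nrm (x - y))"
    using contr by blast
  then obtain sf where sf: "\<And>i. i < N \<Longrightarrow> sf i < 1 \<and> (\<forall>x y. nrm (w i x - w i y) \<le> sf i * nrm (x - y))"
    by metis
  define s where "s = Max (insert 0 (sf ` {..<N}))"
  have s0: "0 \<le> s" unfolding s_def by simp
  have s1: "s < 1" unfolding s_def using sf by (subst Max_less_iff) auto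
  have sfle: "sf i \<le> s" if "i < N" for i unfolding s_def using that by (intro Max_ge) auto
  have Wc: "\<forall>i<N. \<forall>x y. nrm (w i x - w i y) \<le> s * nrm (x - y)"
  proof (intro allI impI)
    fix i x y assume i: "i < N"
    have "nrm (w i x - w i y) \<le> sf i * nrm (x - y)" using sf[OF i] by blast
    also have "\<dots> \<le> s * nrm (x - y)" using sfle[OF i] nn by (intro mult_right_mono) auto
    finally show "nrm (w i x - w i y) \<le> s * nrm (x - y)" .
  qed
  have wm: "\<forall>i<N. w i \<in> borel_measurable borel"
  proof (intro allI impI)
    fix i assume i: "i < N"
    have "(A * s * B)-lipschitz_on UNIV (w i)"
    proof (rule lipschitz_onI)
      fix x y :: "real^'n"
      have "dist (w i x) (w i y) \<le> A * nrm (w i x - w i y)" using AB(3) by (simp add: dist_norm)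
      also have "\<dots> \<le> A * (s * nrm (x - y))" using Wc i AB(1) by (intro mult_left_mono) auto
      also have "\<dots> \<le> A * (s * (B * dist x y))" using AB(1) AB(4) s0
        by (intro mult_left_mono) (auto simp: dist_norm)
      finally show "dist (w i x) (w i y) \<le> A * s * B * dist x y" by (simp add: mult_ac)
      show "0 \<le> A * s * B" using AB s0 by simp
    qed
    then show "w i \<in> borel_measurable borel"
      by (intro borel_measurable_continuous_onI lipschitz_on_continuous_on)
  qed
  have muinv: "\<forall>h. (\<forall>x. \<bar>h x\<bar> \<le> M) \<longrightarrow> h \<in> borel_measurable \<mu> \<longrightarrow> integral\<^sup>L \<mu> h = integral\<^sup>L \<mu> (Top N w p h)" for M
    using mu_inv[OF ps sets_mu inv wm p sum1] by blast
  have nrmc: "continuous_on UNIV nrm"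
    using convex_on_continuous[OF open_UNIV is_norm_convex[OF norm]] .
  have nrmm: "(\<lambda>x. nrm (x - 0)) \<in> borel_measurable \<mu>"
    using borel_measurable_continuous_onI[OF nrmc] measurable_cong_sets[OF sets_mu refl] by (simp del: measurable_cong_sets) blast
  have exP: "\<exists>P. (\<forall>x. pmf P x = sel \<delta> x) \<and> (\<forall>x. x \<notin> lattice \<delta> \<longrightarrow> sel \<delta> x = 0) \<and>
      (\<forall>g B. (\<forall>x. \<bar>g x\<bar> \<le> B) \<longrightarrow> measure_pmf.expectation P g =
         measure_pmf.expectation P (\<lambda>x. \<Sum>i<N. p i * g (roundoff \<delta> (w i x))))" if d: "\<delta> > 0" for \<delta>
  proof -
    obtain C where C: "pos_rec_class (lattice \<delta>) N (\<lambda>i x. roundoff \<delta> (w i x)) p C"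
      "stationary_on N (\<lambda>i x. roundoff \<delta> (w i x)) p C (sel \<delta>)"
      using sel d unfolding Pi_family_def by blast
    have CL: "C \<subseteq> lattice \<delta>" using C(1) unfolding pos_rec_class_def comm_class_def by blast
    have z: "\<forall>x. x \<notin> lattice \<delta> \<longrightarrow> sel \<delta> x = 0" using C(2) CL unfolding stationary_on_def by blast
    show ?thesis using stationary_pmf[OF C(2) p sum1] z by blast
  qed
  define Pf where "Pf \<delta> = (SOME P. (\<forall>x. pmf P x = sel \<delta> x) \<and> (\<forall>x. x \<notin> lattice \<delta> \<longrightarrow> sel \<delta> x = 0) \<and>
      (\<forall>g B. (\<forall>x. \<bar>g x\<bar> \<le> B) \<longrightarrow> measure_pmf.expectation P g =
         measure_pmf.expectation P (\<lambda>x. \<Sum>i<N. p i * g (roundoff \<delta> (w i x)))))" for \<delta>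
  have Pf: "(\<forall>x. pmf (Pf \<delta>) x = sel \<delta> x) \<and> (\<forall>x. x \<notin> lattice \<delta> \<longrightarrow> sel \<delta> x = 0) \<and>
      (\<forall>g B. (\<forall>x. \<bar>g x\<bar> \<le> B) \<longrightarrow> measure_pmf.expectation (Pf \<delta>) g =
         measure_pmf.expectation (Pf \<delta>) (\<lambda>x. \<Sum>i<N. p i * g (roundoff \<delta> (w i x))))" if "\<delta> > 0" for \<delta>
    unfolding Pf_def by (rule someI_ex[OF exP[OF that]])
  define F where "F \<delta> h = measure_pmf.expectation (Pf \<delta>) h" for \<delta> and h :: "real^'n \<Rightarrow> real"
  have lipF: "\<forall>g L M. 0 \<le> L \<longrightarrow> (\<forall>x y. \<bar>g x - g y\<bar> \<le> L * dist x y) \<longrightarrow> (\<forall>x. \<bar>g x\<bar> \<le> M) \<longrightarrow>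
      ((\<lambda>\<delta>. F \<delta> g) \<longlongrightarrow> integral\<^sup>L \<mu> g) (at_right 0)"
  proof (intro allI impI)
    fix g :: "real^'n \<Rightarrow> real" and L M
    assume L: "0 \<le> L" and gL: "\<forall>x y. \<bar>g x - g y\<bar> \<le> L * dist x y" and gM: "\<forall>x. \<bar>g x\<bar> \<le> M"
    have gL': "\<forall>x y. \<bar>g x - g y\<bar> \<le> (L * A) * nrm (x - y)"
    proof (intro allI)
      fix x y
      have "\<bar>g x - g y\<bar> \<le> L * dist x y" using gL by blast
      also have "\<dots> \<le> L * (A * nrm (x - y))" using L AB(3) by (intro mult_left_mono) (auto simp: dist_norm)
      finally show "\<bar>g x - g y\<bar> \<le> (L * A) * nrm (x - y)" by (simp add: mult_ac)
    qed
    have LA: "0 \<le> L * A" using L AB by simp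
    define K where "K = (L * A) * (B * (real CARD('n) / 2)) / (1 - s)"
    have bound: "\<bar>F \<delta> g - integral\<^sup>L \<mu> g\<bar> \<le> K * \<delta>" if d: "\<delta> > 0" for \<delta>
    proof -
      have "\<bar>integral\<^sup>L (measure_pmf (Pf \<delta>)) g - integral\<^sup>L \<mu> g\<bar> \<le> (L * A) * (B * (real CARD('n) * \<delta> / 2)) / (1 - s)"
      proof (rule main_est[where d="\<lambda>x y. nrm (x - y)" and W=w and V="\<lambda>i x. roundoff \<delta> (w i x)" and zz=0])
        show "prob_space (measure_pmf (Pf \<delta>))" by (rule measure_pmf.prob_space_axioms)
        show "prob_space \<mu>" by (rule ps)
        show "\<forall>i<N. 0 \<le> p i" by (rule p)
        show "(\<Sum>i<N. p i) = 1" by (rule sum1)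
        show "\<forall>i<N. \<forall>x y. nrm (w i x - w i y) \<le> s * nrm (x - y)" by (rule Wc)
        show "0 \<le> s" "s < 1" by (rule s0, rule s1)
        show "\<forall>x y. 0 \<le> nrm (x - y)" using nn by blast
        show "\<forall>i<N. \<forall>x. nrm (roundoff \<delta> (w i x) - w i x) \<le> B * (real CARD('n) * \<delta> / 2)"
        proof (intro allI impI)
          fix i x
          have "nrm (roundoff \<delta> (w i x) - w i x) \<le> B * norm (roundoff \<delta> (w i x) - w i x)" by (rule AB(4))
          also have "\<dots> \<le> B * (real CARD('n) * \<delta> / 2)"
            using roundoff_err[OF d] AB(2) by (intro mult_left_mono) auto
          finally show "nrm (roundoff \<delta> (w i x) - w i x) \<le> B * (real CARD('n) * \<delta> / 2)" .
        qed
        show "\<forall>x. \<bar>g x\<bar> \<le> M" by (rule gM)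
        show "\<forall>x y. \<bar>g x - g y\<bar> \<le> L * A * nrm (x - y)" by (rule gL')
        show "0 \<le> L * A" by (rule LA)
        show "\<forall>h. (\<forall>x. \<bar>h x\<bar> \<le> M) \<longrightarrow> h \<in> borel_measurable (measure_pmf (Pf \<delta>)) \<longrightarrow>
            integral\<^sup>L (measure_pmf (Pf \<delta>)) h = integral\<^sup>L (measure_pmf (Pf \<delta>)) (Top N (\<lambda>i x. roundoff \<delta> (w i x)) p h)"
        proof (intro allI impI)
          fix h :: "real^'n \<Rightarrow> real" assume "\<forall>x. \<bar>h x\<bar> \<le> M"
          then have "measure_pmf.expectation (Pf \<delta>) h =
              measure_pmf.expectation (Pf \<delta>) (\<lambda>x. \<Sum>i<N. p i * h (roundoff \<delta> (w i x)))"
            using Pf[OF d] by blast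
          also have "(\<lambda>x. \<Sum>i<N. p i * h (roundoff \<delta> (w i x))) = Top N (\<lambda>i x. roundoff \<delta> (w i x)) p h"
            by (rule ext) (simp add: Top_def)
          finally show "measure_pmf.expectation (Pf \<delta>) h = measure_pmf.expectation (Pf \<delta>) (Top N (\<lambda>i x. roundoff \<delta> (w i x)) p h)" .
        qed
        show "\<forall>h. (\<forall>x. \<bar>h x\<bar> \<le> M) \<longrightarrow> h \<in> borel_measurable \<mu> \<longrightarrow> integral\<^sup>L \<mu> h = integral\<^sup>L \<mu> (Top N w p h)"
          by (rule muinv)
        show "\<forall>k. (Top N (\<lambda>i x. roundoff \<delta> (w i x)) p ^^ k) g \<in> borel_measurable (measure_pmf (Pf \<delta>)) \<and>
                 (Top N w p ^^ k) g \<in> borel_measurable (measure_pmf (Pf \<delta>))" by simp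
        show "\<forall>k. (Top N w p ^^ k) g \<in> borel_measurable \<mu>"
        proof
          fix k
          have "\<forall>x y. \<bar>(Top N w p ^^ k) g x - (Top N w p ^^ k) g y\<bar> \<le> (L * A * s ^ k * B) * dist x y"
          proof (intro allI)
            fix x y
            have "\<bar>(Top N w p ^^ k) g x - (Top N w p ^^ k) g y\<bar> \<le> (L * A * s ^ k) * nrm (x - y)"
              by (rule Top_iter_lip[OF p sum1 Wc s0 gL' LA])
            also have "\<dots> \<le> (L * A * s ^ k) * (B * dist x y)"
              using AB(4) LA s0 by (intro mult_left_mono) (auto simp: dist_norm)
            finally show "\<bar>(Top N w p ^^ k) g x - (Top N w p ^^ k) g y\<bar> \<le> (L * A * s ^ k * B) * dist x y"
              by (simp add: mult_ac)
          qed
          then have "continuous_on UNIV ((Top N w p ^^ k) g)"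
            by (rule lip_cont) (use LA s0 AB in simp)
          then show "(Top N w p ^^ k) g \<in> borel_measurable \<mu>"
            using borel_measurable_continuous_onI measurable_cong_sets[OF sets_mu refl] by blast
        qed
        show "(\<lambda>x. nrm (x - 0)) \<in> borel_measurable (measure_pmf (Pf \<delta>))" by simp
        show "(\<lambda>x. nrm (x - 0)) \<in> borel_measurable \<mu>" by (rule nrmm)
      qed
      also have "\<dots> = K * \<delta>" unfolding K_def by (simp add: field_simps)
      finally show ?thesis unfolding F_def .
    qed
    have "((\<lambda>\<delta>. F \<delta> g - integral\<^sup>L \<mu> g) \<longlongrightarrow> 0) (at_right 0)"
    proof (rule Lim_null_comparison)
      show "eventually (\<lambda>\<delta>. norm (F \<delta> g - integral\<^sup>L \<mu> g) \<le> K * \<delta>) (at_right 0)"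
        using bound by (auto simp: eventually_at_right_less intro: eventually_mono[OF eventually_at_right_less])
      have "((\<lambda>\<delta>. K * \<delta>) \<longlongrightarrow> K * 0) (at_right (0::real))"
        by (intro tendsto_mult tendsto_const tendsto_ident_at)
      then show "((\<lambda>\<delta>. K * \<delta>) \<longlongrightarrow> 0) (at_right (0::real))" by simp
    qed
    then show "((\<lambda>\<delta>. F \<delta> g) \<longlongrightarrow> integral\<^sup>L \<mu> g) (at_right 0)" by (simp add: LIM_zero_iff)
  qed
  have monoF: "\<forall>\<delta>>0. \<forall>h1 h2 B1 B2. (\<forall>x. h1 x \<le> h2 x) \<longrightarrow> (\<forall>x. \<bar>h1 x\<bar> \<le> B1) \<longrightarrow> (\<forall>x. \<bar>h2 x\<bar> \<le> B2) \<longrightarrow> F \<delta> h1 \<le> F \<delta> h2"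
  proof (intro allI impI)
    fix \<delta> :: real and h1 h2 :: "real^'n \<Rightarrow> real" and B1 B2
    assume le: "\<forall>x. h1 x \<le> h2 x" and b1: "\<forall>x. \<bar>h1 x\<bar> \<le> B1" and b2: "\<forall>x. \<bar>h2 x\<bar> \<le> B2"
    have i1: "integrable (measure_pmf (Pf \<delta>)) h1"
      by (rule measure_pmf.integrable_const_bound[where B=B1]) (use b1 in auto)
    have i2: "integrable (measure_pmf (Pf \<delta>)) h2"
      by (rule measure_pmf.integrable_const_bound[where B=B2]) (use b2 in auto)
    show "F \<delta> h1 \<le> F \<delta> h2" unfolding F_def by (rule integral_mono[OF i1 i2]) (use le in auto)
  qed
  obtain M0 where M0: "\<forall>x. \<bar>f x\<bar> \<le> M0" using bdd unfolding bounded_iff by auto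
  have lower: "eventually (\<lambda>\<delta>. a < F \<delta> f) (at_right 0)" if "a < integral\<^sup>L \<mu> f" for a
    by (rule portmanteau_lower[OF ps sets_mu monoF lipF cont M0 that])
  have upper: "eventually (\<lambda>\<delta>. F \<delta> f < a) (at_right 0)" if a: "integral\<^sup>L \<mu> f < a" for a
  proof -
    have c2: "continuous_on UNIV (\<lambda>x. - f x)" using cont by (intro continuous_intros)
    have M2: "\<forall>x. \<bar>- f x\<bar> \<le> M0" using M0 by simp
    have "- a < integral\<^sup>L \<mu> (\<lambda>x. - f x)" using a by simp
    then have "eventually (\<lambda>\<delta>. - a < F \<delta> (\<lambda>x. - f x)) (at_right 0)"
      by (rule portmanteau_lower[OF ps sets_mu monoF lipF c2 M2])
    then show ?thesis by (rule eventually_mono) (simp add: F_def)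
  qed
  have tF: "((\<lambda>\<delta>. F \<delta> f) \<longlongrightarrow> integral\<^sup>L \<mu> f) (at_right 0)"
    by (rule order_tendstoI) (use lower upper in auto)
  have eq: "eventually (\<lambda>\<delta>. F \<delta> f = (\<Sum>\<^sub>\<infinity>x\<in>lattice \<delta>. f x * sel \<delta> x)) (at_right 0)"
  proof (rule eventually_mono[OF eventually_at_right_less])
    fix \<delta> :: real assume d: "0 < \<delta>"
    have "F \<delta> f = (\<Sum>\<^sub>\<infinity>x. pmf (Pf \<delta>) x * f x)"
      unfolding F_def by (rule pmf_integral_infsum[where B=M0]) (use M0 in auto)
    also have "\<dots> = (\<Sum>\<^sub>\<infinity>x. f x * sel \<delta> x)" using Pf[OF d] by (simp add: mult.commute)
    also have "\<dots> = (\<Sum>\<^sub>\<infinity>x\<in>lattice \<delta>. f x * sel \<delta> x)"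
      by (rule infsum_cong_neutral) (use Pf[OF d] in auto)
    finally show "F \<delta> f = (\<Sum>\<^sub>\<infinity>x\<in>lattice \<delta>. f x * sel \<delta> x)" .
  qed
  show ?thesis using tendsto_cong[OF eq] tF by simp
qed

end
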